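(* For every quandle $X$ and every subquandle $M\subseteq X$, the regular closure $c^{reg}_X(M)$ associated with the reflection $\pi_0\dashv U$ coincides with the pullback closure $c_X(M)$.
   Context: A quandle is a set $X$ with two binary operations $\lhd,\lhd^{-1}$ satisfying, for all $x,y,z\in X$: $x\lhd x = x = x\lhd^{-1}x$; $(x\lhd y)\lhd^{-1}y = x = (x\lhd^{-1}y)\lhd y$; $(x\lhd y)\lhd z = (x\lhd z)\lhd(y\lhd z)$ and $(x\lhd^{-1}y)\lhd^{-1}z = (x\lhd^{-1}z)\lhd^{-1}(y\lhd^{-1}z)$. Homomorphisms preserve both operations; $\mathsf{Qnd}$ is the resulting category. A quandle is trivial if $x\lhd y = x = x\lhd^{-1}y$ for all $x,y$; these form the full subcategory $\mathsf{Qnd}^*$, with inclusion $U$. For $x\in X$, the orbit $[x]_X$ is the set of all elements $x\lhd^{\alpha_1}x_1\cdots\lhd^{\alpha_n}x_n$ ($n\ge 0$, $x_i\in X$, $\lhd^{\alpha_i}\in\{\lhd,\lhd^{-1}\}$, bracketed from the left). The functor $\pi_0\colon\mathsf{Qnd}\to\mathsf{Qnd}^*$ sends $X$ to the trivial quandle of its orbits and is left adjoint to $U$, with unit $\eta_X\colon X\to U\pi_0(X)$, $x\mapsto[x]_X$. The pullback closure operator $c$: for a subquandle $M\subseteq X$ with inclusion $m$, $c_X(M)$ is the inverse image under $\eta_X$ of the image of $U\pi_0(m)$. The regular closure $c^{reg}_X(M)$ is the equalizer of $\eta_{X+_MX}\circ i$ and $\eta_{X+_MX}\circ j$, where $i,j\colon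 X\to X+_MX$ is the cokernel pair (pushout of $m$ along itself) of the inclusion $m\colon M\to X$ in $\mathsf{Qnd}$. *)

theory Defs
  imports Main
begin

record 'a qnd =
  qcarrier :: "'a set"
  qop :: "'a \<Rightarrow> 'a \<Rightarrow> 'a"
  qinv :: "'a \<Rightarrow> 'a \<Rightarrow> 'a"

definition quandle :: "('a, 'b) qnd_scheme \<Rightarrow> bool" where
  "quandle X \<longleftrightarrow>
     (\<forall>x\<in>qcarrier X. \<forall>y\<in>qcarrier X. qop X x y \<in> qcarrier X \<and> qinv X x y \<in> qcarrier X) \<and>
     (\<forall>x\<in>qcarrier X. qop X x x = x \<and> qinv X x x = x) \<and>
     (\<forall>x\<in>qcarrier X. \<forall>y\<in>qcarrier X. qinv X (qop X x y) y = x \<and> qop X (qinv X x y) y = x) \<and>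
     (\<forall>x\<in>qcarrier X. \<forall>y\<in>qcarrier X. \<forall>z\<in>qcarrier X.
        qop X (qop X x y) z = qop X (qop X x z) (qop X y z) \<and>
        qinv X (qinv X x y) z = qinv X (qinv X x z) (qinv X y z))"

definition subquandle :: "'a set \<Rightarrow> ('a, 'b) qnd_scheme \<Rightarrow> bool" where
  "subquandle M X \<longleftrightarrow> M \<subseteq> qcarrier X \<and>
     (\<forall>x\<in>M. \<forall>y\<in>M. qop X x y \<in> M \<and> qinv X x y \<in> M)"

definition orbit_step :: "('a, 'b) qnd_scheme \<Rightarrow> ('a \<times> 'a) set" where
  "orbit_step X = {(a, qop X a b) | a b. a \<in> qcarrier X \<and> b \<in> qcarrier X} \<union>
                  {(a, qinv X a b) | a b. a \<in> qcarrier X \<and> b \<in> qcarrier X}"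

text \<open>The orbit [x]_X: all x op^{a1} x1 ... op^{an} xn; this is eta_X x.\<close>
definition orbit :: "('a, 'b) qnd_scheme \<Rightarrow> 'a \<Rightarrow> 'a set" where
  "orbit X x = {y. (x, y) \<in> (orbit_step X)\<^sup>*}"

text \<open>c_X(M) = eta_X^{-1}(image of U pi_0(m)), where U pi_0(m) sends [m]_M to [m]_X.\<close>
definition pb_closure :: "('a, 'b) qnd_scheme \<Rightarrow> 'a set \<Rightarrow> 'a set" where
  "pb_closure X M = {x \<in> qcarrier X. orbit X x \<in> orbit X ` M}"

section \<open>Cokernel pair X +_M X in Qnd (pushout of the inclusion along itself),
  constructed as a presented quandle\<close>

datatype 'g qterm = Gen 'g | Lop "'g qterm" "'g qterm" | Linv "'g qterm" "'g qterm"

inductive_set wf_terms :: "('a, 'b) qnd_scheme \<Rightarrow> ('a + 'a) qterm set" for X where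
  gen_l: "x \<in> qcarrier X \<Longrightarrow> Gen (Inl x) \<in> wf_terms X"
| gen_r: "x \<in> qcarrier X \<Longrightarrow> Gen (Inr x) \<in> wf_terms X"
| lop: "a \<in> wf_terms X \<Longrightarrow> b \<in> wf_terms X \<Longrightarrow> Lop a b \<in> wf_terms X"
| linv: "a \<in> wf_terms X \<Longrightarrow> b \<in> wf_terms X \<Longrightarrow> Linv a b \<in> wf_terms X"

text \<open>The least quandle congruence on terms over two copies of X that makes both
  copies homomorphic images of X and identifies the two copies of each element of M.\<close>
inductive_set po_cong :: "('a, 'b) qnd_scheme \<Rightarrow> 'a set \<Rightarrow> (('a + 'a) qterm \<times> ('a + 'a) qterm) set"
  for X M where
  refl: "a \<in> wf_terms X \<Longrightarrow> (a, a) \<in> po_cong X M"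
| sym: "(a, b) \<in> po_cong X M \<Longrightarrow> (b, a) \<in> po_cong X M"
| trans: "(a, b) \<in> po_cong X M \<Longrightarrow> (b, c) \<in> po_cong X M \<Longrightarrow> (a, c) \<in> po_cong X M"
| cong_op: "(a, a') \<in> po_cong X M \<Longrightarrow> (b, b') \<in> po_cong X M \<Longrightarrow> (Lop a b, Lop a' b') \<in> po_cong X M"
| cong_inv: "(a, a') \<in> po_cong X M \<Longrightarrow> (b, b') \<in> po_cong X M \<Longrightarrow> (Linv a b, Linv a' b') \<in> po_cong X M"
| idem_op: "a \<in> wf_terms X \<Longrightarrow> (Lop a a, a) \<in> po_cong X M"
| idem_inv: "a \<in> wf_terms X \<Longrightarrow> (Linv a a, a) \<in> po_cong X M"
| right_inv1: "a \<in> wf_terms X \<Longrightarrow> b \<in> wf_terms X \<Longrightarrow> (Linv (Lop a b) b, a) \<in> po_cong X M"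
| right_inv2: "a \<in> wf_terms X \<Longrightarrow> b \<in> wf_terms X \<Longrightarrow> (Lop (Linv a b) b, a) \<in> po_cong X M"
| dist_op: "a \<in> wf_terms X \<Longrightarrow> b \<in> wf_terms X \<Longrightarrow> c \<in> wf_terms X \<Longrightarrow>
     (Lop (Lop a b) c, Lop (Lop a c) (Lop b c)) \<in> po_cong X M"
| dist_inv: "a \<in> wf_terms X \<Longrightarrow> b \<in> wf_terms X \<Longrightarrow> c \<in> wf_terms X \<Longrightarrow>
     (Linv (Linv a b) c, Linv (Linv a c) (Linv b c)) \<in> po_cong X M"
| hom_l_op: "x \<in> qcarrier X \<Longrightarrow> y \<in> qcarrier X \<Longrightarrow>
     (Gen (Inl (qop X x y)), Lop (Gen (Inl x)) (Gen (Inl y))) \<in> po_cong X M"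
| hom_l_inv: "x \<in> qcarrier X \<Longrightarrow> y \<in> qcarrier X \<Longrightarrow>
     (Gen (Inl (qinv X x y)), Linv (Gen (Inl x)) (Gen (Inl y))) \<in> po_cong X M"
| hom_r_op: "x \<in> qcarrier X \<Longrightarrow> y \<in> qcarrier X \<Longrightarrow>
     (Gen (Inr (qop X x y)), Lop (Gen (Inr x)) (Gen (Inr y))) \<in> po_cong X M"
| hom_r_inv: "x \<in> qcarrier X \<Longrightarrow> y \<in> qcarrier X \<Longrightarrow>
     (Gen (Inr (qinv X x y)), Linv (Gen (Inr x)) (Gen (Inr y))) \<in> po_cong X M"
| glue: "m \<in> M \<Longrightarrow> (Gen (Inl m), Gen (Inr m)) \<in> po_cong X M"

definition cokernel_pair :: "('a, 'b) qnd_scheme \<Rightarrow> 'a set \<Rightarrow> ('a + 'a) qterm set qnd" where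
  "cokernel_pair X M =
     \<lparr> qcarrier = {po_cong X M `` {t} | t. t \<in> wf_terms X},
       qop = (\<lambda>A B. po_cong X M `` {Lop (SOME a. a \<in> A) (SOME b. b \<in> B)}),
       qinv = (\<lambda>A B. po_cong X M `` {Linv (SOME a. a \<in> A) (SOME b. b \<in> B)}) \<rparr>"

definition cp_i :: "('a, 'b) qnd_scheme \<Rightarrow> 'a set \<Rightarrow> 'a \<Rightarrow> ('a + 'a) qterm set" where
  "cp_i X M x = po_cong X M `` {Gen (Inl x)}"

definition cp_j :: "('a, 'b) qnd_scheme \<Rightarrow> 'a set \<Rightarrow> 'a \<Rightarrow> ('a + 'a) qterm set" where
  "cp_j X M x = po_cong X M `` {Gen (Inr x)}"

text \<open>Equalizer of eta_{X+_M X} o i and eta_{X+_M X} o j.\<close>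
definition reg_closure :: "('a, 'b) qnd_scheme \<Rightarrow> 'a set \<Rightarrow> 'a set" where
  "reg_closure X M = {x \<in> qcarrier X.
      orbit (cokernel_pair X M) (cp_i X M x) = orbit (cokernel_pair X M) (cp_j X M x)}"

end

theory Submission
  imports Defs
begin

lemma orbit_eqI:
  assumes "(u, v) \<in> (orbit_step Y)\<^sup>*" "(v, u) \<in> (orbit_step Y)\<^sup>*"
  shows "orbit Y u = orbit Y v"
  using assms unfolding orbit_def by (auto intro: rtrancl_trans)

lemma po_cong_wf:
  assumes "quandle X" "subquandle M X" "(a, b) \<in> po_cong X M"
  shows "a \<in> wf_terms X \<and> b \<in> wf_terms X"
  using assms(3)
  by (induction rule: po_cong.induct)
     (use assms(1,2) in \<open>auto intro: wf_terms.intros simp: quandle_def subquandle_def\<close>)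

lemma class_mem: "a \<in> wf_terms X \<Longrightarrow> a \<in> po_cong X M `` {a}"
  by (auto intro: po_cong.refl)

lemma class_eq: "(a, b) \<in> po_cong X M \<Longrightarrow> po_cong X M `` {a} = po_cong X M `` {b}"
  by (auto intro: po_cong.trans po_cong.sym)

lemma some_class: "a \<in> wf_terms X \<Longrightarrow> (a, SOME t. t \<in> po_cong X M `` {a}) \<in> po_cong X M"
proof -
  assume "a \<in> wf_terms X"
  then have "\<exists>t. t \<in> po_cong X M `` {a}" using class_mem by blast
  then have "(SOME t. t \<in> po_cong X M `` {a}) \<in> po_cong X M `` {a}" by (rule someI_ex)
  then show ?thesis by simp
qed

lemma qop_cp:
  assumes "a \<in> wf_terms X" "b \<in> wf_terms X"
  shows "qop (cokernel_pair X M) (po_cong X M `` {a}) (po_cong X M `` {b}) = po_cong X M `` {Lop a b}"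
proof -
  have "(Lop (SOME t. t \<in> po_cong X M `` {a}) (SOME t. t \<in> po_cong X M `` {b}), Lop a b) \<in> po_cong X M"
    using some_class[OF assms(1)] some_class[OF assms(2)] by (blast intro: po_cong.cong_op po_cong.sym)
  then show ?thesis unfolding cokernel_pair_def by (simp add: class_eq)
qed

lemma qinv_cp:
  assumes "a \<in> wf_terms X" "b \<in> wf_terms X"
  shows "qinv (cokernel_pair X M) (po_cong X M `` {a}) (po_cong X M `` {b}) = po_cong X M `` {Linv a b}"
proof -
  have "(Linv (SOME t. t \<in> po_cong X M `` {a}) (SOME t. t \<in> po_cong X M `` {b}), Linv a b) \<in> po_cong X M"
    using some_class[OF assms(1)] some_class[OF assms(2)] by (blast intro: po_cong.cong_inv po_cong.sym)
  then show ?thesis unfolding cokernel_pair_def by (simp add: class_eq)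
qed

lemma cp_i_steps:
  assumes "(x, y) \<in> (orbit_step X)\<^sup>*"
  shows "(cp_i X M x, cp_i X M y) \<in> (orbit_step (cokernel_pair X M))\<^sup>*"
  using assms
proof (induction rule: rtrancl_induct)
  case base then show ?case by simp
next
  case (step y z)
  have "(cp_i X M y, cp_i X M z) \<in> orbit_step (cokernel_pair X M)"
    using step(2) unfolding orbit_step_def
  proof (elim UnE CollectE exE conjE)
    fix a b assume h: "(y, z) = (a, qop X a b)" "a \<in> qcarrier X" "b \<in> qcarrier X"
    have wa: "Gen (Inl a) \<in> wf_terms X" "Gen (Inl b) \<in> wf_terms X" using h by (auto intro: wf_terms.intros)
    have "cp_i X M z = qop (cokernel_pair X M) (cp_i X M a) (cp_i X M b)"
      using h unfolding cp_i_def by (simp add: qop_cp[OF wa] class_eq po_cong.hom_l_op)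
    moreover have "cp_i X M a \<in> qcarrier (cokernel_pair X M)" "cp_i X M b \<in> qcarrier (cokernel_pair X M)"
      using wa unfolding cp_i_def cokernel_pair_def by auto
    ultimately show "(cp_i X M y, cp_i X M z) \<in> {(a, qop (cokernel_pair X M) a b) |a b. a \<in> qcarrier (cokernel_pair X M) \<and> b \<in> qcarrier (cokernel_pair X M)} \<union>
    {(a, qinv (cokernel_pair X M) a b) |a b. a \<in> qcarrier (cokernel_pair X M) \<and> b \<in> qcarrier (cokernel_pair X M)}"
      using h by blast
  next
    fix a b assume h: "(y, z) = (a, qinv X a b)" "a \<in> qcarrier X" "b \<in> qcarrier X"
    have wa: "Gen (Inl a) \<in> wf_terms X" "Gen (Inl b) \<in> wf_terms X" using h by (auto intro: wf_terms.intros)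
    have "cp_i X M z = qinv (cokernel_pair X M) (cp_i X M a) (cp_i X M b)"
      using h unfolding cp_i_def by (simp add: qinv_cp[OF wa] class_eq po_cong.hom_l_inv)
    moreover have "cp_i X M a \<in> qcarrier (cokernel_pair X M)" "cp_i X M b \<in> qcarrier (cokernel_pair X M)"
      using wa unfolding cp_i_def cokernel_pair_def by auto
    ultimately show "(cp_i X M y, cp_i X M z) \<in> {(a, qop (cokernel_pair X M) a b) |a b. a \<in> qcarrier (cokernel_pair X M) \<and> b \<in> qcarrier (cokernel_pair X M)} \<union>
    {(a, qinv (cokernel_pair X M) a b) |a b. a \<in> qcarrier (cokernel_pair X M) \<and> b \<in> qcarrier (cokernel_pair X M)}"
      using h by blast
  qed
  then show ?case using step(3) by (rule rtrancl_into_rtrancl[rotated])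
qed

lemma cp_j_steps:
  assumes "(x, y) \<in> (orbit_step X)\<^sup>*"
  shows "(cp_j X M x, cp_j X M y) \<in> (orbit_step (cokernel_pair X M))\<^sup>*"
  using assms
proof (induction rule: rtrancl_induct)
  case base then show ?case by simp
next
  case (step y z)
  have "(cp_j X M y, cp_j X M z) \<in> orbit_step (cokernel_pair X M)"
    using step(2) unfolding orbit_step_def
  proof (elim UnE CollectE exE conjE)
    fix a b assume h: "(y, z) = (a, qop X a b)" "a \<in> qcarrier X" "b \<in> qcarrier X"
    have wa: "Gen (Inr a) \<in> wf_terms X" "Gen (Inr b) \<in> wf_terms X" using h by (auto intro: wf_terms.intros)
    have "cp_j X M z = qop (cokernel_pair X M) (cp_j X M a) (cp_j X M b)"
      using h unfolding cp_j_def by (simp add: qop_cp[OF wa] class_eq po_cong.hom_r_op)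
    moreover have "cp_j X M a \<in> qcarrier (cokernel_pair X M)" "cp_j X M b \<in> qcarrier (cokernel_pair X M)"
      using wa unfolding cp_j_def cokernel_pair_def by auto
    ultimately show "(cp_j X M y, cp_j X M z) \<in> {(a, qop (cokernel_pair X M) a b) |a b. a \<in> qcarrier (cokernel_pair X M) \<and> b \<in> qcarrier (cokernel_pair X M)} \<union>
    {(a, qinv (cokernel_pair X M) a b) |a b. a \<in> qcarrier (cokernel_pair X M) \<and> b \<in> qcarrier (cokernel_pair X M)}"
      using h by blast
  next
    fix a b assume h: "(y, z) = (a, qinv X a b)" "a \<in> qcarrier X" "b \<in> qcarrier X"
    have wa: "Gen (Inr a) \<in> wf_terms X" "Gen (Inr b) \<in> wf_terms X" using h by (auto intro: wf_terms.intros)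
    have "cp_j X M z = qinv (cokernel_pair X M) (cp_j X M a) (cp_j X M b)"
      using h unfolding cp_j_def by (simp add: qinv_cp[OF wa] class_eq po_cong.hom_r_inv)
    moreover have "cp_j X M a \<in> qcarrier (cokernel_pair X M)" "cp_j X M b \<in> qcarrier (cokernel_pair X M)"
      using wa unfolding cp_j_def cokernel_pair_def by auto
    ultimately show "(cp_j X M y, cp_j X M z) \<in> {(a, qop (cokernel_pair X M) a b) |a b. a \<in> qcarrier (cokernel_pair X M) \<and> b \<in> qcarrier (cokernel_pair X M)} \<union>
    {(a, qinv (cokernel_pair X M) a b) |a b. a \<in> qcarrier (cokernel_pair X M) \<and> b \<in> qcarrier (cokernel_pair X M)}"
      using h by blast
  qed
  then show ?case using step(3) by (rule rtrancl_into_rtrancl[rotated])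
qed

lemma orbit_op:
  assumes "quandle X" "x \<in> qcarrier X" "y \<in> qcarrier X"
  shows "orbit X (qop X x y) = orbit X x" "orbit X (qinv X x y) = orbit X x"
proof -
  have c: "qop X x y \<in> qcarrier X" "qinv X x y \<in> qcarrier X"
    and e: "qinv X (qop X x y) y = x" "qop X (qinv X x y) y = x"
    using assms unfolding quandle_def by auto
  have s1: "(x, qop X x y) \<in> orbit_step X" "(x, qinv X x y) \<in> orbit_step X"
    using assms(2,3) unfolding orbit_step_def by blast+
  have s2: "(qop X x y, qinv X (qop X x y) y) \<in> orbit_step X"
       "(qinv X x y, qop X (qinv X x y) y) \<in> orbit_step X"
    using c assms(3) unfolding orbit_step_def by blast+
  show "orbit X (qop X x y) = orbit X x"
    by (rule orbit_eqI) (use s1 s2 e in auto)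
  show "orbit X (qinv X x y) = orbit X x"
    by (rule orbit_eqI) (use s1 s2 e in auto)
qed

fun qhead :: "'g qterm \<Rightarrow> 'g" where
  "qhead (Gen g) = g" | "qhead (Lop a b) = qhead a" | "qhead (Linv a b) = qhead a"

definition lab :: "('a, 'b) qnd_scheme \<Rightarrow> 'a set \<Rightarrow> 'a + 'a \<Rightarrow> nat \<times> 'a set" where
  "lab X M g = (case g of Inl y \<Rightarrow> (if orbit X y \<in> orbit X ` M then 0 else 1, orbit X y)
                        | Inr y \<Rightarrow> (if orbit X y \<in> orbit X ` M then 0 else 2, orbit X y))"

lemma lab_resp:
  assumes "quandle X" "(a, b) \<in> po_cong X M"
  shows "lab X M (qhead a) = lab X M (qhead b)"
  using assms(2)
  by (induction rule: po_cong.induct) (auto simp: lab_def orbit_op[OF assms(1)])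

lemma carrier_some:
  assumes "quandle X" "subquandle M X" "A \<in> qcarrier (cokernel_pair X M)"
  shows "(SOME t. t \<in> A) \<in> wf_terms X \<and> A = po_cong X M `` {SOME t. t \<in> A}"
proof -
  obtain s where s: "s \<in> wf_terms X" "A = po_cong X M `` {s}"
    using assms(3) unfolding cokernel_pair_def by auto
  have "(s, SOME t. t \<in> A) \<in> po_cong X M" using some_class[OF s(1)] s(2) by simp
  then show ?thesis using s po_cong_wf[OF assms(1,2)] class_eq by metis
qed

lemma F_step:
  assumes "quandle X" "subquandle M X" "(A, B) \<in> (orbit_step (cokernel_pair X M))\<^sup>*"
  shows "lab X M (qhead (SOME t. t \<in> A)) = lab X M (qhead (SOME t. t \<in> B))"
  using assms(3)
proof (induction rule: rtrancl_induct)
  case base then show ?case by simp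
next
  case (step B C)
  from step(2) obtain D where h: "B \<in> qcarrier (cokernel_pair X M)" "D \<in> qcarrier (cokernel_pair X M)"
    "C = po_cong X M `` {Lop (SOME t. t \<in> B) (SOME t. t \<in> D)} \<or>
     C = po_cong X M `` {Linv (SOME t. t \<in> B) (SOME t. t \<in> D)}"
    unfolding orbit_step_def by (auto simp: cokernel_pair_def)
  have wb: "(SOME t. t \<in> B) \<in> wf_terms X" "(SOME t. t \<in> D) \<in> wf_terms X"
    using carrier_some[OF assms(1,2) h(1)] carrier_some[OF assms(1,2) h(2)] by auto
  have "lab X M (qhead (SOME t. t \<in> C)) = lab X M (qhead (SOME t. t \<in> B))"
    using h(3)
  proof
    assume c: "C = po_cong X M `` {Lop (SOME t. t \<in> B) (SOME t. t \<in> D)}"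
    have "Lop (SOME t. t \<in> B) (SOME t. t \<in> D) \<in> wf_terms X" using wb by (rule wf_terms.lop)
    from some_class[OF this, of M] c lab_resp[OF assms(1)]
    show ?thesis by (metis qhead.simps(2))
  next
    assume c: "C = po_cong X M `` {Linv (SOME t. t \<in> B) (SOME t. t \<in> D)}"
    have "Linv (SOME t. t \<in> B) (SOME t. t \<in> D) \<in> wf_terms X" using wb by (rule wf_terms.linv)
    from some_class[OF this, of M] c lab_resp[OF assms(1)]
    show ?thesis by (metis qhead.simps(3))
  qed
  then show ?case using step(3) by simp
qed

theorem mainTheorem5:
  fixes X :: "'a qnd" and M :: "'a set"
  assumes "quandle X" and "subquandle M X"
  shows "reg_closure X M = pb_closure X M"
proof
  show "reg_closure X M \<subseteq> pb_closure X M"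
  proof
    fix x assume "x \<in> reg_closure X M"
    then have x: "x \<in> qcarrier X"
      and e: "orbit (cokernel_pair X M) (cp_i X M x) = orbit (cokernel_pair X M) (cp_j X M x)"
      unfolding reg_closure_def by auto
    have "cp_j X M x \<in> orbit (cokernel_pair X M) (cp_j X M x)" unfolding orbit_def by simp
    then have "(cp_i X M x, cp_j X M x) \<in> (orbit_step (cokernel_pair X M))\<^sup>*"
      using e unfolding orbit_def by blast
    from F_step[OF assms(1,2) this]
    have "lab X M (qhead (SOME t. t \<in> cp_i X M x)) = lab X M (qhead (SOME t. t \<in> cp_j X M x))" .
    moreover have "Gen (Inl x) \<in> wf_terms X" "Gen (Inr x) \<in> wf_terms X"
      using x by (auto intro: wf_terms.intros)
    ultimately have "lab X M (Inl x) = lab X M (Inr x)"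
      using some_class[of "Gen (Inl x)" X M] some_class[of "Gen (Inr x)" X M]
        lab_resp[OF assms(1)] unfolding cp_i_def cp_j_def by (metis qhead.simps(1))
    then have "orbit X x \<in> orbit X ` M" unfolding lab_def by (auto split: if_splits)
    then show "x \<in> pb_closure X M" using x unfolding pb_closure_def by simp
  qed
next
  show "pb_closure X M \<subseteq> reg_closure X M"
  proof
    fix x assume "x \<in> pb_closure X M"
    then obtain m where x: "x \<in> qcarrier X" and m: "m \<in> M" and e: "orbit X x = orbit X m"
      unfolding pb_closure_def by auto
    have "x \<in> orbit X x" "m \<in> orbit X m" unfolding orbit_def by simp_all
    then have r: "(x, m) \<in> (orbit_step X)\<^sup>*" "(m, x) \<in> (orbit_step X)\<^sup>*"
      using e unfolding orbit_def by auto
    have g: "cp_i X M m = cp_j X M m"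
      unfolding cp_i_def cp_j_def using m by (rule class_eq[OF po_cong.glue])
    have "orbit (cokernel_pair X M) (cp_i X M x) = orbit (cokernel_pair X M) (cp_j X M x)"
      apply (rule orbit_eqI)
      using cp_i_steps[OF r(1), of M] cp_j_steps[OF r(2), of M]
        cp_j_steps[OF r(1), of M] cp_i_steps[OF r(2), of M] g
      by (auto intro: rtrancl_trans)
    then show "x \<in> reg_closure X M" using x unfolding reg_closure_def by simp
  qed
qed

end
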